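(* Let $\mathcal C$ be an operadic category and $\pi:d\to e$ a fibrewise trivial morphism of $\mathcal C$. Then a morphism $\varphi:c\to d$ is fibrewise trivial if and only if $\pi\varphi$ is fibrewise trivial.
   Context: Operadic categories: $\mathcal S$ is a skeleton of finite sets, with fixed equivalences $R_I:\mathcal S/I\to\mathcal S^I$ sending $f:J\to I$ to its fibres. An operadic category is a category $\mathcal C$ with a functor $|\cdot|:\mathcal C\to\mathcal S$ and functors $R_c:\mathcal C/c\to\mathcal C^{|c|}$ with $|\cdot|^{|c|}\circ R_c=R_{|c|}\circ(|\cdot|/c)$; the fibre $\psi^{-1}i$ of $\psi:c\to d$ at $i\in|d|$ is the $i$-th component of $R_d(\psi)$; for $\varphi:b\to c,\psi:c\to d$, $\varphi^\psi=R_d(\varphi:\psi\varphi\to\psi)$ with components $\varphi^\psi_j:(\psi\varphi)^{-1}j\to\psi^{-1}j$; $u$ is trivial if $|u|=1$ and $R_u=\mathrm{dom}$. Axioms: fibres of identities are trivial; double slice condition: for $\psi:c\to d$, $R_c\circ(\mathrm{dom}/\psi)=(\cong)\circ(\prod_jR_{\psi^{-1}j})\circ(R_d/\psi)$ as functors $(\mathcal C/d)/\psi\to\mathcal C^{|c|}$, via $\mathcal C^{|d|}/R_d\psi\cong\prod_j\mathcal C/\psi^{-1}j$ and $|c|\cong\sum_j|\psi|^{-1}j$ (on objects: $(\varphi^\psi_{|\psi|(i)})^{-1}i=\varphi^{-1}i$). A morphism of $\mathcal C$ is fibrewise trivial if all its fibres are trivial objects. *)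

theory Defs
  imports Main
begin

text \<open>The skeleton S of finite sets: objects are natural numbers n (standing for
  the set {0..<n}); a morphism J \<rightarrow> I is a function on nat, relevant on {0..<J}.
  The fixed equivalence R_I sends f : J \<rightarrow> I to its fibres, the fibre over i being
  identified with {0..<card(f^-1 i)} via the order-preserving enumeration below.\<close>

definition fibre_enum :: "(nat \<Rightarrow> nat) \<Rightarrow> nat \<Rightarrow> nat \<Rightarrow> nat list" where
  "fibre_enum f J i = sorted_list_of_set {x. x < J \<and> f x = i}"

text \<open>Data of an operadic category.
  crd c = |c|, crdm f = |f|;  fib psi j = psi^-1 j  (R_d on objects of C/d);
  fibm psi phi j = phi^psi_j  (R_d on the morphism phi : (b, psi phi) \<rightarrow> (c, psi) of C/d).
  cmp g f = g \<circ> f.\<close>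

record ('o, 'm) opcat =
  obj :: "'o set"
  mor :: "'m set"
  dm :: "'m \<Rightarrow> 'o"
  cd :: "'m \<Rightarrow> 'o"
  cmp :: "'m \<Rightarrow> 'm \<Rightarrow> 'm"
  ident :: "'o \<Rightarrow> 'm"
  crd :: "'o \<Rightarrow> nat"
  crdm :: "'m \<Rightarrow> nat \<Rightarrow> nat"
  fib :: "'m \<Rightarrow> nat \<Rightarrow> 'o"
  fibm :: "'m \<Rightarrow> 'm \<Rightarrow> nat \<Rightarrow> 'm"

definition hom :: "('o, 'm, 'x) opcat_scheme \<Rightarrow> 'o \<Rightarrow> 'o \<Rightarrow> 'm set" where
  "hom C a b = {f \<in> mor C. dm C f = a \<and> cd C f = b}"

definition category :: "('o, 'm, 'x) opcat_scheme \<Rightarrow> bool" where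
  "category C \<longleftrightarrow>
    (\<forall>f\<in>mor C. dm C f \<in> obj C \<and> cd C f \<in> obj C) \<and>
    (\<forall>a\<in>obj C. ident C a \<in> hom C a a) \<and>
    (\<forall>f\<in>mor C. \<forall>g\<in>mor C. cd C f = dm C g \<longrightarrow> cmp C g f \<in> hom C (dm C f) (cd C g)) \<and>
    (\<forall>f\<in>mor C. cmp C f (ident C (dm C f)) = f \<and> cmp C (ident C (cd C f)) f = f) \<and>
    (\<forall>f\<in>mor C. \<forall>g\<in>mor C. \<forall>h\<in>mor C. cd C f = dm C g \<and> cd C g = dm C h \<longrightarrow>
        cmp C h (cmp C g f) = cmp C (cmp C h g) f)"

definition card_functor :: "('o, 'm, 'x) opcat_scheme \<Rightarrow> bool" where
  "card_functor C \<longleftrightarrow>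
    (\<forall>f\<in>mor C. \<forall>x<crd C (dm C f). crdm C f x < crd C (cd C f)) \<and>
    (\<forall>a\<in>obj C. \<forall>x<crd C a. crdm C (ident C a) x = x) \<and>
    (\<forall>f\<in>mor C. \<forall>g\<in>mor C. cd C f = dm C g \<longrightarrow>
        (\<forall>x<crd C (dm C f). crdm C (cmp C g f) x = crdm C g (crdm C f x)))"

text \<open>The functors R_c : C/c \<rightarrow> C^|c|, with |.|^|c| \<circ> R_c = R_|c| \<circ> (|.|/c).\<close>
definition fibre_functors :: "('o, 'm, 'x) opcat_scheme \<Rightarrow> bool" where
  "fibre_functors C \<longleftrightarrow>
    (\<forall>\<psi>\<in>mor C. \<forall>j<crd C (cd C \<psi>).
        fib C \<psi> j \<in> obj C \<and>
        crd C (fib C \<psi> j) = card {x. x < crd C (dm C \<psi>) \<and> crdm C \<psi> x = j}) \<and>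
    (\<forall>\<psi>\<in>mor C. \<forall>\<phi>\<in>mor C. cd C \<phi> = dm C \<psi> \<longrightarrow> (\<forall>j<crd C (cd C \<psi>).
        fibm C \<psi> \<phi> j \<in> hom C (fib C (cmp C \<psi> \<phi>) j) (fib C \<psi> j) \<and>
        (\<forall>k<crd C (fib C (cmp C \<psi> \<phi>) j).
           fibre_enum (crdm C \<psi>) (crd C (dm C \<psi>)) j ! crdm C (fibm C \<psi> \<phi> j) k
           = crdm C \<phi> (fibre_enum (crdm C (cmp C \<psi> \<phi>)) (crd C (dm C \<phi>)) j ! k)))) \<and>
    (\<forall>\<psi>\<in>mor C. \<forall>j<crd C (cd C \<psi>). fibm C \<psi> (ident C (dm C \<psi>)) j = ident C (fib C \<psi> j)) \<and>
    (\<forall>\<psi>\<in>mor C. \<forall>\<phi>2\<in>mor C. \<forall>\<phi>1\<in>mor C. cd C \<phi>2 = dm C \<psi> \<and> cd C \<phi>1 = dm C \<phi>2 \<longrightarrow>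
       (\<forall>j<crd C (cd C \<psi>).
          fibm C \<psi> (cmp C \<phi>2 \<phi>1) j = cmp C (fibm C \<psi> \<phi>2 j) (fibm C (cmp C \<psi> \<phi>2) \<phi>1 j)))"

definition trivial_obj :: "('o, 'm, 'x) opcat_scheme \<Rightarrow> 'o \<Rightarrow> bool" where
  "trivial_obj C u \<longleftrightarrow> u \<in> obj C \<and> crd C u = 1 \<and>
    (\<forall>\<psi>\<in>mor C. cd C \<psi> = u \<longrightarrow> fib C \<psi> 0 = dm C \<psi>) \<and>
    (\<forall>\<psi>\<in>mor C. \<forall>\<phi>\<in>mor C. cd C \<psi> = u \<and> cd C \<phi> = dm C \<psi> \<longrightarrow> fibm C \<psi> \<phi> 0 = \<phi>)"

text \<open>Double slice condition, for psi : c \<rightarrow> d, on objects phi : b \<rightarrow> c and morphisms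
  chi : a \<rightarrow> b of (C/d)/psi, using |c| \<cong> \<Sum>_j |psi|^-1 j, i \<leftrightarrow> (j,k) with i the k-th
  element of the fibre of |psi| over j.\<close>
definition double_slice :: "('o, 'm, 'x) opcat_scheme \<Rightarrow> bool" where
  "double_slice C \<longleftrightarrow>
    (\<forall>\<psi>\<in>mor C. \<forall>\<phi>\<in>mor C. cd C \<phi> = dm C \<psi> \<longrightarrow>
      (\<forall>j<crd C (cd C \<psi>). \<forall>k<crd C (fib C \<psi> j).
        (let i = fibre_enum (crdm C \<psi>) (crd C (dm C \<psi>)) j ! k in
          fib C \<phi> i = fib C (fibm C \<psi> \<phi> j) k \<and>
          (\<forall>\<chi>\<in>mor C. cd C \<chi> = dm C \<phi> \<longrightarrow>
             fibm C \<phi> \<chi> i = fibm C (fibm C \<psi> \<phi> j) (fibm C (cmp C \<psi> \<phi>) \<chi> j) k))))"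

definition operadic_category :: "('o, 'm, 'x) opcat_scheme \<Rightarrow> bool" where
  "operadic_category C \<longleftrightarrow> category C \<and> card_functor C \<and> fibre_functors C \<and>
    (\<forall>c\<in>obj C. \<forall>i<crd C c. trivial_obj C (fib C (ident C c) i)) \<and>
    double_slice C"

definition fibrewise_trivial :: "('o, 'm, 'x) opcat_scheme \<Rightarrow> 'm \<Rightarrow> bool" where
  "fibrewise_trivial C f \<longleftrightarrow> (\<forall>i<crd C (cd C f). trivial_obj C (fib C f i))"

end

theory Submission
  imports Defs
begin

lemma key:
  fixes C :: "('o, 'm) opcat" and \<pi> \<phi> :: 'm
  assumes oc: "operadic_category C"
    and pm: "\<pi> \<in> mor C" and ft: "fibrewise_trivial C \<pi>"
    and fm: "\<phi> \<in> mor C" and cdp: "cd C \<phi> = dm C \<pi>"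
    and j: "j < crd C (cd C \<pi>)"
  shows "\<exists>a. {x. x < crd C (dm C \<pi>) \<and> crdm C \<pi> x = j} = {a}
     \<and> fib C \<phi> a = fib C (cmp C \<pi> \<phi>) j"
proof -
  have cat: "category C" and ff: "fibre_functors C" and ds: "double_slice C"
    using oc unfolding operadic_category_def by auto
  have tr: "trivial_obj C (fib C \<pi> j)" using ft j unfolding fibrewise_trivial_def by auto
  hence c1: "crd C (fib C \<pi> j) = 1" unfolding trivial_obj_def by auto
  have "card {x. x < crd C (dm C \<pi>) \<and> crdm C \<pi> x = j} = 1"
    using ff pm j c1 unfolding fibre_functors_def by metis
  then obtain a where A: "{x. x < crd C (dm C \<pi>) \<and> crdm C \<pi> x = j} = {a}"
    using card_1_singletonE by blast
  have en: "fibre_enum (crdm C \<pi>) (crd C (dm C \<pi>)) j ! 0 = a"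
    unfolding fibre_enum_def A by simp
  have ds1: "fib C \<phi> a = fib C (fibm C \<pi> \<phi> j) 0"
    using ds pm fm cdp j c1 en unfolding double_slice_def Let_def by (metis zero_less_one)
  have h: "fibm C \<pi> \<phi> j \<in> hom C (fib C (cmp C \<pi> \<phi>) j) (fib C \<pi> j)"
    using ff pm fm cdp j unfolding fibre_functors_def by blast
  hence "fib C (fibm C \<pi> \<phi> j) 0 = fib C (cmp C \<pi> \<phi>) j"
    using tr unfolding trivial_obj_def hom_def by auto
  with A ds1 show ?thesis by auto
qed

theorem lemma8p2:
  fixes C :: "('o, 'm) opcat" and \<pi> \<phi> :: 'm
  assumes "operadic_category C"
    and "\<pi> \<in> mor C" and "fibrewise_trivial C \<pi>"
    and "\<phi> \<in> mor C" and "cd C \<phi> = dm C \<pi>"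
  shows "fibrewise_trivial C \<phi> \<longleftrightarrow> fibrewise_trivial C (cmp C \<pi> \<phi>)"
proof -
  have cat: "category C" and cf: "card_functor C"
    using assms(1) unfolding operadic_category_def by auto
  have cdc: "cd C (cmp C \<pi> \<phi>) = cd C \<pi>"
    using cat assms unfolding category_def hom_def by auto
  show ?thesis
  proof
    assume F: "fibrewise_trivial C \<phi>"
    show "fibrewise_trivial C (cmp C \<pi> \<phi>)"
      unfolding fibrewise_trivial_def cdc
    proof (intro allI impI)
      fix j assume j: "j < crd C (cd C \<pi>)"
      obtain a where A: "{x. x < crd C (dm C \<pi>) \<and> crdm C \<pi> x = j} = {a}"
        and B: "fib C \<phi> a = fib C (cmp C \<pi> \<phi>) j"
        using key[OF assms j] by blast
      have "a < crd C (cd C \<phi>)" using A assms(5) by auto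
      with F B show "trivial_obj C (fib C (cmp C \<pi> \<phi>) j)"
        unfolding fibrewise_trivial_def by metis
    qed
  next
    assume F: "fibrewise_trivial C (cmp C \<pi> \<phi>)"
    show "fibrewise_trivial C \<phi>"
      unfolding fibrewise_trivial_def
    proof (intro allI impI)
      fix i assume i: "i < crd C (cd C \<phi>)"
      define j where "j = crdm C \<pi> i"
      have j: "j < crd C (cd C \<pi>)" using cf assms(2,5) i unfolding card_functor_def j_def by auto
      obtain a where A: "{x. x < crd C (dm C \<pi>) \<and> crdm C \<pi> x = j} = {a}"
        and B: "fib C \<phi> a = fib C (cmp C \<pi> \<phi>) j"
        using key[OF assms j] by blast
      have "i \<in> {x. x < crd C (dm C \<pi>) \<and> crdm C \<pi> x = j}" using i assms(5) j_def by auto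
      hence "i = a" using A by auto
      with F B j cdc show "trivial_obj C (fib C \<phi> i)"
        unfolding fibrewise_trivial_def by metis
    qed
  qed
qed

end
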